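(* Let $n\ge3$, $x^\Lambda\partial_k\in\mathcal{B}$ and $i\ge-1$. If $\mathrm{lev}_i(x^\Lambda\partial_k)\le i$, then there exists an integer $j$ with $-1\le j\le i$ such that $\mathrm{lev}_j(x^\Lambda\partial_k)=j$.
   Context: Fix an integer $n\ge 3$. A partition is a sequence $\Lambda=(\lambda_j)_{j\ge1}$ of non-negative integers with finite support; $\mathrm{wt}(\Lambda)=\sum_j j\lambda_j$; $\mathrm{Part}(k)$ is the set of partitions with $\lambda_j=0$ for $j>k$. Write $x^\Lambda=\prod_j x_j^{\lambda_j}$, $\deg(x^\Lambda)=\sum_j\lambda_j$. $\mathcal{B}=\{x^\Lambda\partial_k : 1\le k\le n,\ \Lambda\in\mathrm{Part}(k-1)\}$. For an integer $i\ge-1$, let $r_i\in\{1,\dots,n-1\}$ with $i\equiv r_i\pmod{n-1}$ and $h_i=\lfloor (i-1)/(n-1)\rfloor+1$. Define $\mathrm{WD}(x^\Lambda\partial_k)=\mathrm{wt}(\Lambda)-\deg(x^\Lambda)+n-k$ and $\mathrm{lev}_i(x^\Lambda\partial_k)=h_i\,\mathrm{WD}(x^\Lambda\partial_k)+\deg(x^\Lambda)-1$. *)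

theory Defs
  imports Main
begin

text \<open>A partition is a finitely supported sequence of naturals indexed by j >= 1;
  we model it as a function nat => nat and ignore index 0 (forced to be 0 in Part).\<close>

definition Part :: "nat \<Rightarrow> (nat \<Rightarrow> nat) set" where
  "Part k = {\<Lambda>. \<forall>j. (j = 0 \<or> j > k) \<longrightarrow> \<Lambda> j = 0}"

definition supp_part :: "(nat \<Rightarrow> nat) \<Rightarrow> nat set" where
  "supp_part \<Lambda> = {j. 0 < j \<and> \<Lambda> j \<noteq> 0}"

definition is_partition :: "(nat \<Rightarrow> nat) \<Rightarrow> bool" where
  "is_partition \<Lambda> \<longleftrightarrow> finite (supp_part \<Lambda>) \<and> \<Lambda> 0 = 0"

definition wt :: "(nat \<Rightarrow> nat) \<Rightarrow> nat" where
  "wt \<Lambda> = (\<Sum>j\<in>supp_part \<Lambda>. j * \<Lambda> j)"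

definition mdeg :: "(nat \<Rightarrow> nat) \<Rightarrow> nat" where
  "mdeg \<Lambda> = (\<Sum>j\<in>supp_part \<Lambda>. \<Lambda> j)"

definition in_B :: "nat \<Rightarrow> (nat \<Rightarrow> nat) \<Rightarrow> nat \<Rightarrow> bool" where
  "in_B n \<Lambda> k \<longleftrightarrow> 1 \<le> k \<and> k \<le> n \<and> \<Lambda> \<in> Part (k - 1)"

definition hh :: "nat \<Rightarrow> int \<Rightarrow> int" where
  "hh n i = (i - 1) div (int n - 1) + 1"

definition WD :: "nat \<Rightarrow> (nat \<Rightarrow> nat) \<Rightarrow> nat \<Rightarrow> int" where
  "WD n \<Lambda> k = int (wt \<Lambda>) - int (mdeg \<Lambda>) + int n - int k"

definition lev :: "nat \<Rightarrow> int \<Rightarrow> (nat \<Rightarrow> nat) \<Rightarrow> nat \<Rightarrow> int" where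
  "lev n i \<Lambda> k = hh n i * WD n \<Lambda> k + int (mdeg \<Lambda>) - 1"

end

theory Submission
  imports Defs
begin

lemma WD_nonneg:
  assumes "in_B n \<Lambda> k"
  shows "WD n \<Lambda> k \<ge> 0"
proof -
  have "mdeg \<Lambda> \<le> wt \<Lambda>"
    unfolding mdeg_def wt_def
    by (rule sum_mono) (auto simp: supp_part_def)
  moreover have "k \<le> n" using assms by (simp add: in_B_def)
  ultimately show ?thesis by (simp add: WD_def)
qed

lemma hh_mono:
  assumes "n \<ge> 3"
  shows "hh n j \<le> hh n (j + 1)"
  unfolding hh_def using assms by (simp add: zdiv_mono1)

lemma lev_step:
  assumes "n \<ge> 3" "in_B n \<Lambda> k"
  shows "lev n j \<Lambda> k \<le> lev n (j + 1) \<Lambda> k"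
proof -
  have "hh n j * WD n \<Lambda> k \<le> hh n (j + 1) * WD n \<Lambda> k"
    using hh_mono[OF assms(1)] WD_nonneg[OF assms(2)] by (simp add: mult_right_mono)
  thus ?thesis by (simp add: lev_def)
qed

lemma lev_m1:
  assumes "n \<ge> 3"
  shows "lev n (-1) \<Lambda> k \<ge> -1"
proof -
  define c where "c = int n - 1"
  have c2: "c \<ge> 2" using assms by (simp add: c_def)
  have "(-2::int) = (c - 2) + (-1) * c" by simp
  hence "(-2::int) div c = -1 + (c - 2) div c"
    using c2 by (metis div_mult_self1 not_numeral_le_zero order.refl zero_le_numeral)
  also have "(c - 2) div c = 0" using c2 by simp
  finally have "(-2::int) div (int n - 1) = -1" by (simp add: c_def)
  hence "hh n (-1) = 0" by (simp add: hh_def)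
  thus ?thesis by (simp add: lev_def)
qed

theorem lemma2p5:
  fixes n k :: nat and \<Lambda> :: "nat \<Rightarrow> nat" and i :: int
  assumes "n \<ge> 3" and "in_B n \<Lambda> k" and "i \<ge> -1"
    and "lev n i \<Lambda> k \<le> i"
  shows "\<exists>j::int. -1 \<le> j \<and> j \<le> i \<and> lev n j \<Lambda> k = j"
proof -
  define f where "f j = lev n j \<Lambda> k - j" for j
  have step: "f (j + 1) \<ge> f j - 1" for j
    using lev_step[OF assms(1,2), of j] by (simp add: f_def)
  have f0: "f (-1) \<ge> 0" using lev_m1[OF assms(1), of \<Lambda> k] by (simp add: f_def)
  have "\<forall>m::nat. f (-1 + int m) \<le> 0 \<longrightarrow> (\<exists>j. -1 \<le> j \<and> j \<le> -1 + int m \<and> f j = 0)"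
  proof
    fix m :: nat
    show "f (-1 + int m) \<le> 0 \<longrightarrow> (\<exists>j. -1 \<le> j \<and> j \<le> -1 + int m \<and> f j = 0)"
    proof (induction m)
      case 0
      then show ?case using f0 by force
    next
      case (Suc m)
      show ?case
      proof (cases "f (-1 + int m) \<le> 0")
        case True
        then show ?thesis using Suc.IH by force
      next
        case False
        have "f (-1 + int m + 1) \<ge> f (-1 + int m) - 1" by (rule step)
        hence "f (-1 + int (Suc m)) \<ge> 0" using False by (simp add: add.commute)
        then show ?thesis by (intro impI exI[of _ "-1 + int (Suc m)"]) auto
      qed
    qed
  qed
  from this[rule_format, of "nat (i + 1)"] assms(3,4)
  obtain j where "-1 \<le> j" "j \<le> i" "f j = 0" by (auto simp: f_def)
  thus ?thesis by (auto simp: f_def)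
qed

end
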